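(* Let $B$ be a finite connected graph of positive order without half-loops. Let $s\ge1$, let $\vec m=(m_1,\dots,m_s)$ and $\vec k_0=(k_1^0,\dots,k_s^0)$ be $s$-tuples of positive integers, and let $g_1,\dots,g_s$ be $B$-Ramanujan functions. Then the truncated weighted convolution $(g_1\ast\cdots\ast g_s)^{\vec k_0}_{\vec m}$ is a $B$-Ramanujan function.
   Context: Graphs may have multiple edges and whole-loops; order is $|E|-|V|$. $H_B$ is the Hashimoto matrix of $B$ (indexed by directed edges, $(e,e')$ entry $1$ iff $h(e)=t(e')$ and $e'\ne e^{-1}$), $\rho$ spectral radius. A function $P$ on nonnegative integers is $B$-Ramanujan if $P(k)=\sum_{\mu\in\mathrm{Spec}(H_B)}\mu^kp_\mu(k)+e(k)$ with polynomials $p_\mu$, and for every $\epsilon>0$ there is $C$ with $|e(k)|\le C(\rho(H_B)+\epsilon)^{k/2}$ for all $k$. The truncated weighted convolution is $(g_1\ast\cdots\ast g_s)^{\vec k_0}_{\vec m}(k)=\sum g_1(k_1)\cdots g_s(k_s)$, the sum over all integer vectors $\vec k=(k_1,\dots,k_s)$ with $k_i\ge k_i^0$ and $\sum_im_ik_i=k$. *)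

theory Defs
  imports "HOL-Analysis.Analysis" "HOL-Computational_Algebra.Polynomial"
begin

text \<open>A finite graph B (multiple edges and whole-loops allowed) is given by its
set of directed edges, the finite type 'd, its vertex set, the finite type 'v,
tail and head maps tail, head :: 'd => 'v and the edge reversal rv :: 'd => 'd.
Every undirected edge corresponds to the pair {e, rv e}.\<close>

definition graph :: "('d::finite \<Rightarrow> 'v::finite) \<Rightarrow> ('d \<Rightarrow> 'v) \<Rightarrow> ('d \<Rightarrow> 'd) \<Rightarrow> bool" where
  "graph tail head rv \<longleftrightarrow> (\<forall>e. rv (rv e) = e \<and> tail (rv e) = head e)"

definition no_half_loops :: "('d \<Rightarrow> 'd) \<Rightarrow> bool" where
  "no_half_loops rv \<longleftrightarrow> (\<forall>e. rv e \<noteq> e)"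

definition connected_graph :: "('d::finite \<Rightarrow> 'v::finite) \<Rightarrow> ('d \<Rightarrow> 'v) \<Rightarrow> bool" where
  "connected_graph tail head \<longleftrightarrow> (\<forall>u v. (u, v) \<in> (range (\<lambda>e. (tail e, head e)))\<^sup>*)"

text \<open>Order |E| - |V|, with |E| = (number of directed edges) / 2.\<close>
definition graph_order :: "('d::finite \<Rightarrow> 'v::finite) \<Rightarrow> int" where
  "graph_order tail = int (CARD('d) div 2) - int CARD('v)"

definition hashimoto :: "('d::finite \<Rightarrow> 'v) \<Rightarrow> ('d \<Rightarrow> 'v) \<Rightarrow> ('d \<Rightarrow> 'd) \<Rightarrow> complex^'d^'d" where
  "hashimoto tail head rv = (\<chi> e e'. if head e = tail e' \<and> e' \<noteq> rv e then 1 else 0)"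

definition mat_spectrum :: "complex^'n^'n \<Rightarrow> complex set" where
  "mat_spectrum A = {\<mu>. \<exists>v. v \<noteq> 0 \<and> A *v v = \<mu> *s v}"

definition spectral_rad :: "complex^'n^'n \<Rightarrow> real" where
  "spectral_rad A = Max (norm ` mat_spectrum A)"

definition B_ramanujan ::
  "('d::finite \<Rightarrow> 'v::finite) \<Rightarrow> ('d \<Rightarrow> 'v) \<Rightarrow> ('d \<Rightarrow> 'd) \<Rightarrow> (nat \<Rightarrow> complex) \<Rightarrow> bool" where
  "B_ramanujan tail head rv P \<longleftrightarrow>
     (let H = hashimoto tail head rv in
      \<exists>p :: complex \<Rightarrow> complex poly. \<exists>err :: nat \<Rightarrow> complex.
        (\<forall>k. P k = (\<Sum>\<mu>\<in>mat_spectrum H. \<mu> ^ k * poly (p \<mu>) (of_nat k)) + err k) \<and>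
        (\<forall>\<epsilon>>0. \<exists>C. \<forall>k. norm (err k) \<le> C * (spectral_rad H + \<epsilon>) powr (real k / 2)))"

text \<open>Truncated weighted convolution of g 0, ..., g (s-1) with weights m and lower
bounds k0 (tuples are represented as functions on {..<s}).\<close>
definition trunc_conv ::
  "nat \<Rightarrow> (nat \<Rightarrow> nat \<Rightarrow> complex) \<Rightarrow> (nat \<Rightarrow> nat) \<Rightarrow> (nat \<Rightarrow> nat) \<Rightarrow> nat \<Rightarrow> complex" where
  "trunc_conv s g k0 m k =
     (\<Sum>kv \<in> {kv. (\<forall>i<s. k0 i \<le> kv i) \<and> (\<forall>i\<ge>s. kv i = 0) \<and> (\<Sum>i<s. m i * kv i) = k}.
        \<Prod>i<s. g i (kv i))"

end

theory Submission
  imports Defs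
begin


lemma lin_exp_bound:
  fixes a b :: real
  assumes "0 \<le> a" "a < b"
  shows "\<exists>C. \<forall>k. (real k + 1) * a ^ k \<le> C * b ^ k"
proof (cases "a = 0")
  case True
  show ?thesis
  proof (intro exI[of _ 1] allI)
    fix k show "(real k + 1) * a ^ k \<le> 1 * b ^ k"
      using True assms by (cases k) auto
  qed
next
  case False
  then have a: "a > 0" using assms by simp
  define d where "d = b / a - 1"
  have d: "d > 0" using assms a by (simp add: d_def field_simps)
  have bd: "b = a * (1 + d)" using a by (simp add: d_def field_simps)
  have md: "min 1 d > 0" using d by simp
  show ?thesis
  proof (intro exI[of _ "1 / min 1 d"] allI)
    fix k
    have "1 + real k * d \<le> (1 + d)^k" using Bernoulli_inequality[of d k] d by simp
    moreover have "min 1 d * (real k + 1) \<le> 1 + real k * d"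
    proof -
      have "min 1 d * real k \<le> d * real k" by (intro mult_right_mono) auto
      moreover have "min 1 d \<le> 1" by simp
      ultimately show ?thesis by (simp add: algebra_simps)
    qed
    ultimately have "min 1 d * (real k + 1) \<le> (1+d)^k" by linarith
    hence "(real k + 1) \<le> (1+d)^k / min 1 d" using md by (simp add: field_simps)
    hence "(real k + 1) * a^k \<le> (1+d)^k / min 1 d * a^k"
      using a by (intro mult_right_mono) auto
    also have "\<dots> = 1 / min 1 d * b^k" by (simp add: bd power_mult_distrib)
    finally show "(real k + 1) * a ^ k \<le> 1 / min 1 d * b ^ k" .
  qed
qed

lemma poly_exp_bound:
  fixes p :: "complex poly" and t s :: real
  assumes "0 \<le> t" "t < s"
  shows "\<exists>C. \<forall>k. norm (poly p (of_nat k)) * t ^ k \<le> C * s ^ k"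
  using assms
proof (induction p arbitrary: t s rule: pCons_induct)
  case 0
  then show ?case by (intro exI[of _ 0]) auto
next
  case (pCons a p)
  define s' where "s' = (t + s) / 2"
  have s': "t < s'" "s' < s" "0 \<le> s'" using pCons.prems by (auto simp: s'_def)
  obtain C1 where C1: "\<And>k. norm (poly p (of_nat k)) * t ^ k \<le> C1 * s' ^ k"
    using pCons.IH[OF pCons.prems(1) s'(1)] by blast
  have C1p: "C1 \<ge> 0" using C1[of 0] by simp (smt (verit) norm_ge_zero)
  obtain C2 where C2: "\<And>k. (real k + 1) * s' ^ k \<le> C2 * s ^ k"
    using lin_exp_bound[OF s'(3) s'(2)] by blast
  show ?case
  proof (intro exI[of _ "norm a + C1 * C2"] allI)
    fix k
    have tk: "t ^ k \<le> s ^ k" using pCons.prems by (intro power_mono) auto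
    have "norm (poly (pCons a p) (of_nat k)) \<le> norm a + real k * norm (poly p (of_nat k))"
      by (simp add: norm_triangle_le norm_mult)
    hence "norm (poly (pCons a p) (of_nat k)) * t ^ k \<le> (norm a + real k * norm (poly p (of_nat k))) * t^k"
      using pCons.prems by (intro mult_right_mono) auto
    also have "\<dots> = norm a * t^k + real k * (norm (poly p (of_nat k)) * t^k)" by (simp add: algebra_simps)
    also have "\<dots> \<le> norm a * s^k + real k * (C1 * s' ^ k)"
      using tk C1[of k] by (intro add_mono mult_left_mono) auto
    also have "\<dots> \<le> norm a * s^k + C1 * ((real k + 1) * s' ^ k)"
      using C1p s' by (simp add: algebra_simps mult_left_mono)
    also have "\<dots> \<le> norm a * s^k + C1 * (C2 * s ^ k)"
      using C1p C2[of k] by (intro add_mono mult_left_mono) auto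
    finally show "norm (poly (pCons a p) (of_nat k)) * t ^ k \<le> (norm a + C1 * C2) * s ^ k"
      by (simp add: algebra_simps)
  qed
qed

definition expoly :: "complex \<Rightarrow> complex poly \<Rightarrow> nat \<Rightarrow> complex" where
  "expoly \<mu> p k = \<mu> ^ k * poly p (of_nat k)"

locale ram =
  fixes Lam :: "complex set" and r :: real
  assumes finL: "finite Lam" and r1: "1 \<le> r" and Lbound: "\<And>\<mu>. \<mu> \<in> Lam \<Longrightarrow> norm \<mu> \<le> r^2"
begin

definition err :: "(nat \<Rightarrow> complex) \<Rightarrow> bool" where
  "err e \<longleftrightarrow> (\<forall>s>r. \<exists>C. \<forall>k. norm (e k) \<le> C * s ^ k)"

definition R :: "(nat \<Rightarrow> complex) \<Rightarrow> bool" where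
  "R f \<longleftrightarrow> (\<exists>p e. err e \<and> (\<forall>k. f k = (\<Sum>\<mu>\<in>Lam. expoly \<mu> (p \<mu>) k) + e k))"

lemma bound_nonneg: "(\<And>k. norm (e k) \<le> C * (s::real) ^ k) \<Longrightarrow> C \<ge> 0"
  by (metis mult.right_neutral norm_ge_zero order_trans power_0)

lemma errI_lt:
  assumes "t > r" "\<And>s. r < s \<Longrightarrow> s < t \<Longrightarrow> \<exists>C. \<forall>k. norm (e k) \<le> C * s ^ k"
  shows "err e"
  unfolding err_def
proof (intro allI impI)
  fix s assume s: "s > r"
  show "\<exists>C. \<forall>k. norm (e k) \<le> C * s ^ k"
  proof (cases "s < t")
    case True then show ?thesis using assms s by blast
  next
    case False
    define s' where "s' = (r + t) / 2"
    have s': "r < s'" "s' < t" "s' \<le> s" using assms False by (auto simp: s'_def)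
    obtain C where C: "\<And>k. norm (e k) \<le> C * s' ^ k" using assms(2)[OF s'(1,2)] by blast
    have Cp: "C \<ge> 0" using bound_nonneg C by blast
    show ?thesis
    proof (intro exI[of _ C] allI)
      fix k
      have "s' ^ k \<le> s ^ k" using s' r1 by (intro power_mono) auto
      then show "norm (e k) \<le> C * s ^ k" using C[of k] Cp by (meson mult_left_mono order_trans)
    qed
  qed
qed

lemma errI_lin:
  assumes "\<And>s. r < s \<Longrightarrow> \<exists>C. \<forall>k. norm (e k) \<le> C * ((real k + 1) * s ^ k)"
  shows "err e"
  unfolding err_def
proof (intro allI impI)
  fix s assume s: "s > r"
  define s' where "s' = (r + s) / 2"
  have s': "r < s'" "s' < s" "0 \<le> s'" using s r1 by (auto simp: s'_def)
  obtain C where C: "\<And>k. norm (e k) \<le> C * ((real k + 1) * s' ^ k)" using assms[OF s'(1)] by blast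
  have Cp: "C \<ge> 0" using C[of 0] by simp (smt (verit) norm_ge_zero)
  obtain C2 where C2: "\<And>k. (real k + 1) * s' ^ k \<le> C2 * s ^ k" using lin_exp_bound[OF s'(3,2)] by blast
  show "\<exists>C. \<forall>k. norm (e k) \<le> C * s ^ k"
  proof (intro exI[of _ "C * C2"] allI)
    fix k
    have "norm (e k) \<le> C * (C2 * s^k)" using C[of k] C2[of k] Cp by (meson mult_left_mono order_trans)
    then show "norm (e k) \<le> C * C2 * s ^ k" by (simp add: mult.assoc)
  qed
qed

lemma err_add: "err e1 \<Longrightarrow> err e2 \<Longrightarrow> err (\<lambda>k. e1 k + e2 k)"
  unfolding err_def
proof (intro allI impI)
  fix s :: real assume e1: "\<forall>s>r. \<exists>C. \<forall>k. norm (e1 k) \<le> C * s ^ k"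
    and e2: "\<forall>s>r. \<exists>C. \<forall>k. norm (e2 k) \<le> C * s ^ k" and s: "s > r"
  obtain C1 C2 where "\<And>k. norm (e1 k) \<le> C1 * s ^ k" "\<And>k. norm (e2 k) \<le> C2 * s ^ k"
    using e1 e2 s by blast
  then show "\<exists>C. \<forall>k. norm (e1 k + e2 k) \<le> C * s ^ k"
    by (intro exI[of _ "C1 + C2"]) (metis (no_types, lifting) add_mono distrib_right norm_triangle_le)
qed

lemma err_mult: "err e \<Longrightarrow> err (\<lambda>k. c * e k)"
  unfolding err_def
proof (intro allI impI)
  fix s :: real assume e: "\<forall>s>r. \<exists>C. \<forall>k. norm (e k) \<le> C * s ^ k" and s: "s > r"
  obtain C where C: "\<And>k. norm (e k) \<le> C * s ^ k" using e s by blast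
  show "\<exists>C. \<forall>k. norm (c * e k) \<le> C * s ^ k"
  proof (intro exI[of _ "norm c * C"] allI)
    fix k show "norm (c * e k) \<le> norm c * C * s ^ k"
      using C[of k] by (simp add: norm_mult mult.assoc mult_left_mono)
  qed
qed

lemma err_zero: "err (\<lambda>k. 0)"
  unfolding err_def by (auto intro: exI[of _ 0])

lemma err_neg: "err e \<Longrightarrow> err (\<lambda>k. - e k)"
  using err_mult[of e "-1"] by simp

lemma err_diff: "err e1 \<Longrightarrow> err e2 \<Longrightarrow> err (\<lambda>k. e1 k - e2 k)"
  using err_add[of e1 "\<lambda>k. - e2 k"] err_neg[of e2] by simp

lemma err_sum: "finite I \<Longrightarrow> (\<And>i. i \<in> I \<Longrightarrow> err (e i)) \<Longrightarrow> err (\<lambda>k. \<Sum>i\<in>I. e i k)"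
proof (induction I rule: finite_induct)
  case empty then show ?case by (simp add: err_zero)
next
  case (insert x F) then show ?case by (simp add: err_add)
qed

lemma err_cong: "err e \<Longrightarrow> (\<And>k. f k = e k) \<Longrightarrow> err f"
proof -
  assume "err e" "\<And>k. f k = e k"
  then have "f = e" by auto
  then show ?thesis using \<open>err e\<close> by simp
qed

lemma err_le: "err e \<Longrightarrow> (\<And>k. norm (f k) \<le> norm (e k)) \<Longrightarrow> err f"
  unfolding err_def by (meson order_trans)

lemma err_finsupp:
  assumes "\<And>k. k \<ge> N \<Longrightarrow> e k = 0"
  shows "err e"
  unfolding err_def
proof (intro allI impI)
  fix s :: real assume s: "s > r"
  show "\<exists>C. \<forall>k. norm (e k) \<le> C * s ^ k"
  proof (intro exI[of _ "\<Sum>j<N. norm (e j)"] allI)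
    fix k
    show "norm (e k) \<le> (\<Sum>j<N. norm (e j)) * s ^ k"
    proof (cases "k < N")
      case True
      have "norm (e k) \<le> (\<Sum>j<N. norm (e j))"
        using True by (intro member_le_sum) auto
      also have "\<dots> \<le> (\<Sum>j<N. norm (e j)) * s ^ k"
      proof -
        have "1 \<le> s ^ k" using s r1 by (intro one_le_power) auto
        moreover have "0 \<le> (\<Sum>j<N. norm (e j))" by (intro sum_nonneg) auto
        ultimately show ?thesis by (metis mult_le_cancel_left1 not_le)
      qed
      finally show ?thesis .
    next
      case False then show ?thesis using assms s r1 by (simp add: sum_nonneg)
    qed
  qed
qed

lemma err_shift: "err e \<Longrightarrow> err (\<lambda>k. e (Suc k))"
  unfolding err_def
proof (intro allI impI)
  fix s :: real assume e: "\<forall>s>r. \<exists>C. \<forall>k. norm (e k) \<le> C * s ^ k" and s: "s > r"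
  obtain C where C: "\<And>k. norm (e k) \<le> C * s ^ k" using e s by blast
  show "\<exists>C. \<forall>k. norm (e (Suc k)) \<le> C * s ^ k"
    by (intro exI[of _ "C * s"]) (metis C mult.assoc power_Suc)
qed

lemma expoly_err: "norm \<mu> \<le> r \<Longrightarrow> err (expoly \<mu> p)"
  unfolding err_def
proof (intro allI impI)
  fix s assume m: "norm \<mu> \<le> r" and s: "s > r"
  obtain C where C: "\<And>k. norm (poly p (of_nat k)) * norm \<mu> ^ k \<le> C * s ^ k"
    using poly_exp_bound[of "norm \<mu>" s p] m s by auto
  show "\<exists>C. \<forall>k. norm (expoly \<mu> p k) \<le> C * s ^ k"
    by (intro exI[of _ C]) (metis C expoly_def mult.commute norm_mult norm_power)
qed

end


lemma expoly_add: "expoly \<mu> (p + q) k = expoly \<mu> p k + expoly \<mu> q k"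
  by (simp add: expoly_def algebra_simps)
lemma expoly_smult: "expoly \<mu> (smult c p) k = c * expoly \<mu> p k"
  by (simp add: expoly_def algebra_simps)
lemma expoly_0[simp]: "expoly \<mu> 0 k = 0"
  by (simp add: expoly_def)
lemma expoly_Suc: "expoly \<mu> p (Suc k) = expoly \<mu> (smult \<mu> (pcompose p [:1,1:])) k"
  by (simp add: expoly_def poly_pcompose algebra_simps)

context ram begin

lemma R_cong: "R f \<Longrightarrow> (\<And>k. g k = f k) \<Longrightarrow> R g"
proof -
  assume "R f" "\<And>k. g k = f k"
  then have "g = f" by auto
  then show ?thesis using \<open>R f\<close> by simp
qed

lemma R_err: "err e \<Longrightarrow> R e"
  unfolding R_def by (intro exI[of _ "\<lambda>_. 0"] exI[of _ e]) simp

lemma R_zero: "R (\<lambda>k. 0)"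
  using R_err err_zero by blast

lemma R_add: assumes "R f" "R g" shows "R (\<lambda>k. f k + g k)"
proof -
  obtain p1 e1 where 1: "err e1" "\<And>k. f k = (\<Sum>\<mu>\<in>Lam. expoly \<mu> (p1 \<mu>) k) + e1 k"
    using assms(1) unfolding R_def by blast
  obtain p2 e2 where 2: "err e2" "\<And>k. g k = (\<Sum>\<mu>\<in>Lam. expoly \<mu> (p2 \<mu>) k) + e2 k"
    using assms(2) unfolding R_def by blast
  show ?thesis unfolding R_def
    by (intro exI[of _ "\<lambda>\<mu>. p1 \<mu> + p2 \<mu>"] exI[of _ "\<lambda>k. e1 k + e2 k"] conjI err_add 1 2 allI)
       (simp add: 1 2 expoly_add sum.distrib)
qed

lemma R_mult: assumes "R f" shows "R (\<lambda>k. c * f k)"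
proof -
  obtain p1 e1 where 1: "err e1" "\<And>k. f k = (\<Sum>\<mu>\<in>Lam. expoly \<mu> (p1 \<mu>) k) + e1 k"
    using assms(1) unfolding R_def by blast
  show ?thesis unfolding R_def
    by (intro exI[of _ "\<lambda>\<mu>. smult c (p1 \<mu>)"] exI[of _ "\<lambda>k. c * e1 k"] conjI err_mult 1 allI)
       (simp add: 1 expoly_smult sum_distrib_left algebra_simps)
qed

lemma R_neg: "R f \<Longrightarrow> R (\<lambda>k. - f k)"
  using R_mult[of f "-1"] by simp

lemma R_diff: "R f \<Longrightarrow> R g \<Longrightarrow> R (\<lambda>k. f k - g k)"
  using R_add[of f "\<lambda>k. - g k"] R_neg[of g] by simp

lemma R_sum: "finite I \<Longrightarrow> (\<And>i. i \<in> I \<Longrightarrow> R (f i)) \<Longrightarrow> R (\<lambda>k. \<Sum>i\<in>I. f i k)"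
proof (induction I rule: finite_induct)
  case empty then show ?case by (simp add: R_zero)
next
  case (insert x F) then show ?case by (simp add: R_add)
qed

lemma R_expoly: assumes "\<mu> \<in> Lam" shows "R (expoly \<mu> p)"
  unfolding R_def
proof (intro exI[of _ "\<lambda>\<nu>. if \<nu> = \<mu> then p else 0"] exI[of _ "\<lambda>k. 0"] conjI err_zero allI)
  fix k
  have "(\<Sum>\<nu>\<in>Lam. expoly \<nu> (if \<nu> = \<mu> then p else 0) k) = (\<Sum>\<nu>\<in>Lam. if \<nu> = \<mu> then expoly \<mu> p k else 0)"
    by (intro sum.cong) auto
  also have "\<dots> = expoly \<mu> p k" using assms finL by simp
  finally show "expoly \<mu> p k = (\<Sum>\<nu>\<in>Lam. expoly \<nu> (if \<nu> = \<mu> then p else 0) k) + 0" by simp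
qed

lemma R_shift: assumes "R f" shows "R (\<lambda>k. f (Suc k))"
proof -
  obtain p1 e1 where 1: "err e1" "\<And>k. f k = (\<Sum>\<mu>\<in>Lam. expoly \<mu> (p1 \<mu>) k) + e1 k"
    using assms(1) unfolding R_def by blast
  show ?thesis unfolding R_def
    by (intro exI[of _ "\<lambda>\<mu>. smult \<mu> (pcompose (p1 \<mu>) [:1,1:])"] exI[of _ "\<lambda>k. e1 (Suc k)"]
          conjI err_shift 1 allI)
       (simp add: 1 expoly_Suc)
qed

lemma R_nz:
  assumes "R f"
  shows "\<exists>p e. err e \<and> p 0 = 0 \<and> (\<forall>k. f k = (\<Sum>\<mu>\<in>Lam. expoly \<mu> (p \<mu>) k) + e k)"
proof -
  obtain p1 e1 where 1: "err e1" "\<And>k. f k = (\<Sum>\<mu>\<in>Lam. expoly \<mu> (p1 \<mu>) k) + e1 k"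
    using assms(1) unfolding R_def by blast
  define z where "z = (\<lambda>k. if 0 \<in> Lam then expoly 0 (p1 0) k else 0)"
  have ez: "err z"
  proof (cases "0 \<in> Lam")
    case True then show ?thesis unfolding z_def using expoly_err[of 0] r1 by simp
  next
    case False then show ?thesis unfolding z_def using err_zero by simp
  qed
  have eq: "(\<Sum>\<mu>\<in>Lam. expoly \<mu> (p1 \<mu>) k) = (\<Sum>\<mu>\<in>Lam. expoly \<mu> ((p1(0:=0)) \<mu>) k) + z k" for k
  proof (cases "0 \<in> Lam")
    case True
    then show ?thesis unfolding z_def using finL
      by (simp add: sum.remove[of Lam 0])
  next
    case False
    then have "(\<Sum>\<mu>\<in>Lam. expoly \<mu> ((p1(0:=0)) \<mu>) k) = (\<Sum>\<mu>\<in>Lam. expoly \<mu> (p1 \<mu>) k)"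
      by (intro sum.cong) auto
    then show ?thesis unfolding z_def using False by simp
  qed
  show ?thesis
    by (intro exI[of _ "p1(0:=0)"] exI[of _ "\<lambda>k. z k + e1 k"] conjI err_add ez 1 allI)
       (auto simp: 1 eq)
qed

lemma R_growth:
  assumes "R f" "s > r"
  shows "\<exists>C. \<forall>k. norm (f k) \<le> C * (s^2) ^ k"
proof -
  obtain p e where pe: "err e" "\<And>k. f k = (\<Sum>\<mu>\<in>Lam. expoly \<mu> (p \<mu>) k) + e k"
    using assms(1) unfolding R_def by blast
  have s1: "s \<ge> 1" "r^2 < s^2" using assms r1 by (auto intro!: power_strict_mono)
  have "\<forall>\<mu>\<in>Lam. \<exists>C. \<forall>k. norm (poly (p \<mu>) (of_nat k)) * norm \<mu> ^ k \<le> C * (s^2) ^ k"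
  proof
    fix \<mu> assume "\<mu> \<in> Lam"
    then have "norm \<mu> < s^2" using Lbound s1 by fastforce
    then show "\<exists>C. \<forall>k. norm (poly (p \<mu>) (of_nat k)) * norm \<mu> ^ k \<le> C * (s^2) ^ k"
      using poly_exp_bound[of "norm \<mu>" "s^2" "p \<mu>"] by auto
  qed
  then obtain Cf where Cf: "\<And>\<mu> k. \<mu> \<in> Lam \<Longrightarrow> norm (poly (p \<mu>) (of_nat k)) * norm \<mu> ^ k \<le> Cf \<mu> * (s^2) ^ k"
    by metis
  obtain Ce where Ce: "\<And>k. norm (e k) \<le> Ce * s ^ k" using pe(1) assms(2) unfolding err_def by blast
  have Cep: "Ce \<ge> 0" using bound_nonneg Ce by blast
  show ?thesis
  proof (intro exI[of _ "(\<Sum>\<mu>\<in>Lam. Cf \<mu>) + Ce"] allI)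
    fix k
    have "norm (f k) \<le> (\<Sum>\<mu>\<in>Lam. norm (expoly \<mu> (p \<mu>) k)) + norm (e k)"
      unfolding pe(2) by (rule norm_triangle_le) (intro add_right_mono norm_sum)
    also have "\<dots> \<le> (\<Sum>\<mu>\<in>Lam. Cf \<mu> * (s^2) ^ k) + Ce * (s^2)^k"
    proof (intro add_mono sum_mono)
      fix \<mu> assume "\<mu> \<in> Lam"
      then show "norm (expoly \<mu> (p \<mu>) k) \<le> Cf \<mu> * (s^2) ^ k"
        using Cf[of \<mu> k] by (simp add: expoly_def norm_mult norm_power mult.commute)
    next
      have "s ^ k \<le> (s^2)^k" using s1 by (intro power_mono) (auto simp: power2_eq_square)
      then show "norm (e k) \<le> Ce * (s^2)^k" using Ce[of k] Cep by (meson mult_left_mono order_trans)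
    qed
    finally show "norm (f k) \<le> ((\<Sum>\<mu>\<in>Lam. Cf \<mu>) + Ce) * (s^2) ^ k"
      by (simp add: sum_distrib_right distrib_right)
  qed
qed

end


definition Lop :: "complex \<Rightarrow> complex \<Rightarrow> complex poly \<Rightarrow> complex poly" where
  "Lop \<nu> \<mu> q = smult \<nu> (pcompose q [:1,1:]) - smult \<mu> q"

lemma Lop_add: "Lop \<nu> \<mu> (q1 + q2) = Lop \<nu> \<mu> q1 + Lop \<nu> \<mu> q2"
  by (simp add: Lop_def pcompose_add smult_add_right)

lemma Lop_poly: "poly (Lop \<nu> \<mu> q) x = \<nu> * poly q (x + 1) - \<mu> * poly q x"
  by (simp add: Lop_def poly_pcompose algebra_simps)

lemma pcompose_monom: "pcompose (monom a n) (q :: complex poly) = smult a (q ^ n)"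
proof -
  have "poly (pcompose (monom a n) q) = poly (smult a (q ^ n))"
    by (auto simp: poly_pcompose poly_monom)
  then show ?thesis by (simp add: poly_eq_poly_eq_iff)
qed

lemma coeff_1plus_pow: "coeff ([:1,1:]^Suc n :: complex poly) n = of_nat (Suc n)"
proof (induction n)
  case 0 then show ?case by simp
next
  case (Suc n)
  have e: "[:1,1:] ^ Suc (Suc n) = [:1,1:]^Suc n + pCons 0 ([:1,1:]^Suc n :: complex poly)"
    by (simp add: algebra_simps)
  have "coeff ([:1,1:]^Suc n :: complex poly) (Suc n) = 1" using coeff_linear_power[of 1 "Suc n"] by simp
  then show ?case unfolding e using Suc by simp
qed

lemma deg_drop: "degree p \<le> n \<Longrightarrow> coeff p n = 0 \<Longrightarrow> p = 0 \<or> degree p < n"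
  by (metis le_neq_implies_less leading_coeff_0_iff)

lemma Lop_solve:
  assumes "\<nu> \<noteq> \<mu> \<or> \<nu> \<noteq> 0"
  shows "\<exists>q. Lop \<nu> \<mu> q = p"
proof -
  have "\<forall>p. (p = 0 \<or> degree p < n) \<longrightarrow> (\<exists>q. Lop \<nu> \<mu> q = p)" for n
  proof (induction n)
    case 0
    then show ?case by (auto intro: exI[of _ 0] simp: Lop_def)
  next
    case (Suc n)
    show ?case
    proof (intro allI impI)
      fix p :: "complex poly" assume p: "p = 0 \<or> degree p < Suc n"
      then have dp: "degree p \<le> n" by auto
      obtain q0 where q0: "degree (Lop \<nu> \<mu> q0) \<le> n" "coeff (Lop \<nu> \<mu> q0) n = coeff p n"
      proof (cases "\<nu> = \<mu>")
        case False
        define a where "a = coeff p n / (\<nu> - \<mu>)"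
        have "degree (Lop \<nu> \<mu> (monom a n)) \<le> n"
          unfolding Lop_def pcompose_monom
          by (intro degree_diff_le order.trans[OF degree_smult_le])
             (auto simp: degree_linear_power degree_monom_le intro: order.trans[OF degree_smult_le])
        moreover have "coeff (Lop \<nu> \<mu> (monom a n)) n = coeff p n"
        proof -
          have "coeff (Lop \<nu> \<mu> (monom a n)) n = \<nu> * a - \<mu> * a"
            unfolding Lop_def pcompose_monom by (simp add: coeff_linear_power)
          also have "\<dots> = (\<nu> - \<mu>) * a" by (simp add: algebra_simps)
          also have "\<dots> = coeff p n" using False by (simp add: a_def)
          finally show ?thesis .
        qed
        ultimately show ?thesis using that by blast
      next
        case True
        then have nz: "\<nu> \<noteq> 0" using assms by auto
        define a where "a = coeff p n / (\<nu> * of_nat (Suc n))"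
        define P where "P = ([:1,1:] ^ Suc n :: complex poly)"
        have L: "Lop \<nu> \<mu> (monom a (Suc n)) = smult \<nu> (smult a P - monom a (Suc n))"
          unfolding Lop_def pcompose_monom P_def using True by (simp add: smult_diff_right)
        have dP: "degree P = Suc n" unfolding P_def by (rule degree_linear_power)
        have cP: "coeff P (Suc n) = 1" unfolding P_def by (rule coeff_linear_power)
        have "degree (smult a P - monom a (Suc n)) \<le> Suc n"
          by (intro degree_diff_le) (auto simp: dP degree_monom_le intro: order.trans[OF degree_smult_le])
        moreover have "coeff (smult a P - monom a (Suc n)) (Suc n) = 0" by (simp add: cP)
        ultimately have "degree (smult a P - monom a (Suc n)) \<le> n"
          using deg_drop by fastforce
        then have "degree (Lop \<nu> \<mu> (monom a (Suc n))) \<le> n"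
          unfolding L by (rule order.trans[OF degree_smult_le])
        moreover have "coeff (Lop \<nu> \<mu> (monom a (Suc n))) n = coeff p n"
        proof -
          have cPn: "coeff P n = of_nat (Suc n)" unfolding P_def by (rule coeff_1plus_pow)
          have "coeff (Lop \<nu> \<mu> (monom a (Suc n))) n = \<nu> * (a * coeff P n)"
            unfolding L by simp
          also have "\<dots> = coeff p n" using nz unfolding cPn a_def by (simp del: of_nat_Suc)
          finally show ?thesis .
        qed
        ultimately show ?thesis using that by blast
      qed
      define p' where "p' = p - Lop \<nu> \<mu> q0"
      have "degree p' \<le> n" unfolding p'_def using dp q0(1) by (intro degree_diff_le) auto
      moreover have "coeff p' n = 0" unfolding p'_def using q0(2) by simp
      ultimately have "p' = 0 \<or> degree p' < n" by (rule deg_drop)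
      then obtain q' where "Lop \<nu> \<mu> q' = p'" using Suc.IH by blast
      then have "Lop \<nu> \<mu> (q0 + q') = p" unfolding Lop_add p'_def by simp
      then show "\<exists>q. Lop \<nu> \<mu> q = p" by blast
    qed
  qed
  then show ?thesis by blast
qed


context ram begin

lemma int_err_small:
  assumes e: "err e" and m: "norm \<mu> \<le> r"
  shows "err (\<lambda>k. \<Sum>j<k. \<mu>^(k - 1 - j) * e j)"
proof (rule errI_lin)
  fix s assume s: "r < s"
  obtain C where C: "\<And>k. norm (e k) \<le> C * s ^ k" using e s unfolding err_def by blast
  have Cp: "C \<ge> 0" using bound_nonneg C by blast
  have s1: "s \<ge> 1" using s r1 by simp
  show "\<exists>C. \<forall>k. norm (\<Sum>j<k. \<mu>^(k - 1 - j) * e j) \<le> C * ((real k + 1) * s ^ k)"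
  proof (intro exI[of _ C] allI)
    fix k
    have "norm (\<Sum>j<k. \<mu>^(k - 1 - j) * e j) \<le> (\<Sum>j<k. norm (\<mu>^(k - 1 - j) * e j))"
      by (rule norm_sum)
    also have "\<dots> \<le> (\<Sum>j<k. C * s ^ k)"
    proof (intro sum_mono)
      fix j assume j: "j \<in> {..<k}"
      have "norm (\<mu>^(k - 1 - j) * e j) = norm \<mu> ^ (k - 1 - j) * norm (e j)"
        by (simp add: norm_mult norm_power)
      also have "\<dots> \<le> s ^ (k - 1 - j) * (C * s ^ j)"
        using m s C[of j] r1 by (intro mult_mono power_mono) auto
      also have "\<dots> = C * s ^ (k - 1)"
        using j by (simp add: power_add[symmetric] mult.left_commute)
      also have "\<dots> \<le> C * s ^ k"
        using s1 Cp by (intro mult_left_mono power_increasing) auto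
      finally show "norm (\<mu>^(k - 1 - j) * e j) \<le> C * s ^ k" .
    qed
    also have "\<dots> = real k * (C * s ^ k)" by simp
    also have "\<dots> \<le> C * ((real k + 1) * s ^ k)"
      using Cp s1 by (simp add: algebra_simps)
    finally show "norm (\<Sum>j<k. \<mu>^(k - 1 - j) * e j) \<le> C * ((real k + 1) * s ^ k)" .
  qed
qed

lemma int_err_large:
  assumes e: "err e" and mu: "\<mu> \<in> Lam" and m: "norm \<mu> > r"
  shows "R (\<lambda>k. \<Sum>j<k. \<mu>^(k - 1 - j) * e j)"
proof -
  define M where "M = norm \<mu>"
  have M: "M > r" "M > 0" using m r1 unfolding M_def by auto
  have nz: "\<mu> \<noteq> 0" using M unfolding M_def by auto
  define a where "a = (\<lambda>j. e j / \<mu> ^ Suc j)"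
  have abound: "norm (a j) \<le> (C / M) * (s / M) ^ j" if "\<And>k. norm (e k) \<le> C * s ^ k" for C s j
  proof -
    have "norm (a j) = norm (e j) / M ^ Suc j" unfolding a_def M_def by (simp add: norm_divide norm_power norm_mult del: power_Suc)
    also have "\<dots> \<le> C * s ^ j / M ^ Suc j" using that[of j] M by (intro divide_right_mono) auto
    also have "\<dots> = (C / M) * (s / M) ^ j" by (simp add: power_divide)
    finally show ?thesis .
  qed
  define s0 where "s0 = (r + M) / 2"
  have s0: "r < s0" "s0 < M" "0 < s0" using M r1 unfolding s0_def by auto
  obtain C0 where C0: "\<And>k. norm (e k) \<le> C0 * s0 ^ k" using e s0 unfolding err_def by blast
  have sumg: "summable (\<lambda>j. (C / M) * (s / M) ^ j)" if "0 \<le> s" "s < M" for C s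
    using that M by (intro summable_mult summable_geometric) auto
  have suma: "summable a"
    by (rule summable_comparison_test[OF _ sumg[OF _ s0(2)]])
       (use s0 abound[OF C0] in auto)
  have shifted: "summable (\<lambda>i. a (i + k))" for k using suma by (simp add: summable_iff_shift)
  define c where "c = suminf a"
  define t where "t = (\<lambda>k. - (\<mu> ^ k * suminf (\<lambda>i. a (i + k))))"
  have decomp: "(\<Sum>j<k. \<mu>^(k - 1 - j) * e j) = expoly \<mu> [:c:] k + t k" for k
  proof -
    have "(\<Sum>j<k. \<mu>^(k - 1 - j) * e j) = (\<Sum>j<k. \<mu>^k * a j)"
    proof (intro sum.cong refl)
      fix j assume "j \<in> {..<k}"
      then have "k = (k - 1 - j) + Suc j" by auto
      then have "\<mu> ^ k = \<mu> ^ (k - 1 - j) * \<mu> ^ Suc j" by (metis power_add)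
      then show "\<mu>^(k - 1 - j) * e j = \<mu>^k * a j" unfolding a_def using nz by (simp add: field_simps)
    qed
    also have "\<dots> = \<mu>^k * (\<Sum>j<k. a j)" by (simp add: sum_distrib_left)
    also have "(\<Sum>j<k. a j) = c - suminf (\<lambda>i. a (i + k))"
      unfolding c_def using suminf_split_initial_segment[OF suma, of k] by simp
    finally show ?thesis unfolding t_def expoly_def by (simp add: algebra_simps)
  qed
  have et: "err t"
  proof (rule errI_lt[OF M(1)])
    fix s assume s: "r < s" "s < M"
    obtain C where C: "\<And>k. norm (e k) \<le> C * s ^ k" using e s unfolding err_def by blast
    have Cp: "C \<ge> 0" using bound_nonneg C by blast
    have sp: "s > 0" using s r1 by auto
    show "\<exists>C. \<forall>k. norm (t k) \<le> C * s ^ k"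
    proof (intro exI[of _ "C / (M - s)"] allI)
      fix k
      have "norm (suminf (\<lambda>i. a (i + k))) \<le> (\<Sum>i. (C / M * (s / M) ^ k) * (s / M) ^ i)"
      proof (rule norm_suminf_le)
        fix i show "norm (a (i + k)) \<le> C / M * (s / M) ^ k * (s / M) ^ i"
          using abound[OF C, of "i + k"] by (simp add: power_add mult_ac)
      next
        show "summable (\<lambda>i. C / M * (s / M) ^ k * (s / M) ^ i)"
          using sp s by (intro summable_mult summable_geometric) auto
      qed
      also have "\<dots> = (C / M * (s / M) ^ k) * (1 / (1 - s / M))"
      proof -
        have "(\<Sum>i. (s / M) ^ i) = 1 / (1 - s / M)" using sp s by (intro suminf_geometric) auto
        moreover have "summable (\<lambda>i. (s / M) ^ i)" using sp s by (intro summable_geometric) auto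
        ultimately show ?thesis using suminf_mult[of "\<lambda>i. (s / M) ^ i" "C / M * (s / M) ^ k"] by simp
      qed
      finally have b: "norm (suminf (\<lambda>i. a (i + k))) \<le> (C / M * (s / M) ^ k) * (1 / (1 - s / M))" .
      have "norm (t k) = M ^ k * norm (suminf (\<lambda>i. a (i + k)))"
        unfolding t_def M_def by (simp add: norm_mult norm_power)
      also have "\<dots> \<le> M ^ k * ((C / M * (s / M) ^ k) * (1 / (1 - s / M)))"
        using b M by (intro mult_left_mono) auto
      also have "\<dots> = C / (M - s) * s ^ k"
        using M s by (simp add: power_divide field_simps)
      finally show "norm (t k) \<le> C / (M - s) * s ^ k" .
    qed
  qed
  show ?thesis
    by (rule R_cong[OF R_add[OF R_expoly[OF mu, of "[:c:]"] R_err[OF et]]]) (rule decomp)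
qed

lemma int_err:
  assumes "err e" "\<mu> \<in> Lam"
  shows "R (\<lambda>k. \<Sum>j<k. \<mu>^(k - 1 - j) * e j)"
  using assms int_err_small int_err_large R_err by (cases "norm \<mu> \<le> r") auto

lemma R_int:
  assumes mu: "\<mu> \<in> Lam" and h: "R (\<lambda>k. f (Suc k) - \<mu> * f k)"
  shows "R f"
proof -
  obtain p e where pe: "err e" "p 0 = 0" "\<And>k. f (Suc k) - \<mu> * f k = (\<Sum>\<nu>\<in>Lam. expoly \<nu> (p \<nu>) k) + e k"
    using R_nz[OF h] by blast
  have "\<forall>\<nu>. \<exists>q. Lop \<nu> \<mu> q = p \<nu>"
  proof
    fix \<nu>
    show "\<exists>q. Lop \<nu> \<mu> q = p \<nu>"
    proof (cases "\<nu> \<noteq> \<mu> \<or> \<nu> \<noteq> 0")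
      case True then show ?thesis by (rule Lop_solve)
    next
      case False then show ?thesis using pe(2) by (intro exI[of _ 0]) (auto simp: Lop_def)
    qed
  qed
  then obtain Q where Q: "\<And>\<nu>. Lop \<nu> \<mu> (Q \<nu>) = p \<nu>" by metis
  define ye where "ye = (\<lambda>k. \<Sum>j<k. \<mu>^(k - 1 - j) * e j)"
  define Y where "Y = (\<lambda>k. (\<Sum>\<nu>\<in>Lam. expoly \<nu> (Q \<nu>) k) + ye k)"
  have RY: "R Y" unfolding Y_def ye_def
    by (intro R_add R_sum finL R_expoly int_err pe(1) mu)
  have stepE: "expoly \<nu> q (Suc k) - \<mu> * expoly \<nu> q k = expoly \<nu> (Lop \<nu> \<mu> q) k" for \<nu> q k
    by (simp add: expoly_def Lop_poly algebra_simps)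
  have stepY: "ye (Suc k) - \<mu> * ye k = e k" for k
  proof -
    have "ye (Suc k) = (\<Sum>j<k. \<mu>^(k - j) * e j) + e k"
      unfolding ye_def by simp
    moreover have "\<mu> * ye k = (\<Sum>j<k. \<mu>^(k - j) * e j)"
      unfolding ye_def sum_distrib_left
    proof (intro sum.cong refl)
      fix j assume "j \<in> {..<k}"
      then have "k - j = Suc (k - 1 - j)" by auto
      then show "\<mu> * (\<mu> ^ (k - 1 - j) * e j) = \<mu> ^ (k - j) * e j" by simp
    qed
    ultimately show ?thesis by simp
  qed
  have stepYY: "Y (Suc k) - \<mu> * Y k = f (Suc k) - \<mu> * f k" for k
  proof -
    have "Y (Suc k) - \<mu> * Y k = (\<Sum>\<nu>\<in>Lam. expoly \<nu> (Q \<nu>) (Suc k) - \<mu> * expoly \<nu> (Q \<nu>) k)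
        + (ye (Suc k) - \<mu> * ye k)"
      unfolding Y_def by (simp add: sum_subtractf sum_distrib_left algebra_simps)
    also have "\<dots> = (\<Sum>\<nu>\<in>Lam. expoly \<nu> (p \<nu>) k) + e k"
      unfolding stepE Q stepY ..
    finally show ?thesis using pe(3) by simp
  qed
  define z where "z = (\<lambda>k. f k - Y k)"
  have zs: "z (Suc k) = \<mu> * z k" for k
    using stepYY[of k] unfolding z_def by (simp add: algebra_simps)
  have zk: "z k = expoly \<mu> [:z 0:] k" for k
    by (induction k) (simp_all add: zs expoly_def)
  have "R z" by (rule R_cong[OF R_expoly[OF mu]]) (rule zk)
  then show ?thesis
    by (rule R_cong[OF R_add[OF _ RY]]) (simp add: z_def)
qed

end


definition conv :: "nat \<Rightarrow> nat \<Rightarrow> (nat \<Rightarrow> complex) \<Rightarrow> (nat \<Rightarrow> complex) \<Rightarrow> nat \<Rightarrow> complex" where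
  "conv m b0 F g k = (\<Sum>b\<in>{b. b0 \<le> b \<and> m * b \<le> k}. F (k - m * b) * g b)"

definition delta0 :: "nat \<Rightarrow> complex" where "delta0 a = (if a = 0 then 1 else 0)"

lemma le_mb: "m > 0 \<Longrightarrow> (b::nat) \<le> m * b"
  using mult_le_mono1[of 1 m b] by simp

lemma conv_sub: assumes m: "m > 0" shows "{b. b0 \<le> b \<and> m * b \<le> k} \<subseteq> {..(k::nat)}"
proof
  fix b assume "b \<in> {b. b0 \<le> b \<and> m * b \<le> k}"
  then have "m * b \<le> k" by simp
  moreover have "b \<le> m * b" by (rule le_mb[OF m])
  ultimately have "b \<le> k" by (metis order.trans)
  then show "b \<in> {..k}" by simp
qed

lemma conv_fin: "m > 0 \<Longrightarrow> finite {b. b0 \<le> b \<and> m * b \<le> (k::nat)}"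
  by (rule finite_subset[OF conv_sub]) auto

lemma conv_card: "m > 0 \<Longrightarrow> card {b. b0 \<le> b \<and> m * b \<le> (k::nat)} \<le> k + 1"
proof -
  assume m: "m > 0"
  have "{b. b0 \<le> b \<and> m * b \<le> k} \<subseteq> {..k}"
    using m by (rule conv_sub)
  then have "card {b. b0 \<le> b \<and> m * b \<le> k} \<le> card {..k}" by (intro card_mono) auto
  then show ?thesis by simp
qed

lemma conv_add: "conv m b0 (\<lambda>a. F1 a + F2 a) g k = conv m b0 F1 g k + conv m b0 F2 g k"
  unfolding conv_def by (simp add: distrib_right sum.distrib)

lemma conv_sum: "conv m b0 (\<lambda>a. \<Sum>i\<in>I. F i a) g k = (\<Sum>i\<in>I. conv m b0 (F i) g k)"
  unfolding conv_def sum_distrib_right by (rule sum.swap)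

lemma conv_zero: "conv m b0 (\<lambda>a. 0) g k = 0"
  unfolding conv_def by simp

lemma conv_shift:
  assumes m: "m > 0"
  shows "conv m b0 F g (Suc k) - \<mu> * conv m b0 F g k
         = conv m b0 (\<lambda>a. F (Suc a) - \<mu> * F a) g k + F 0 * conv m b0 delta0 g (Suc k)"
proof -
  define B where "B = {b. b0 \<le> b \<and> m * b \<le> k}"
  define D where "D = {b. b0 \<le> b \<and> m * b = Suc k}"
  have BD: "{b. b0 \<le> b \<and> m * b \<le> Suc k} = B \<union> D" "B \<inter> D = {}"
    unfolding B_def D_def by auto
  have fB: "finite B" unfolding B_def using conv_fin[OF m] .
  have fD: "finite D" unfolding D_def using conv_fin[OF m, of b0 "Suc k"]
    by (rule finite_subset[rotated]) auto
  have c1: "conv m b0 H g (Suc k) = (\<Sum>b\<in>B. H (Suc k - m * b) * g b) + (\<Sum>b\<in>D. H (Suc k - m * b) * g b)" for H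
    unfolding conv_def BD(1) using fB fD BD(2) by (rule sum.union_disjoint)
  have "conv m b0 F g (Suc k) = (\<Sum>b\<in>B. F (Suc (k - m * b)) * g b) + (\<Sum>b\<in>D. F 0 * g b)"
    unfolding c1
  proof (intro arg_cong2[where f="(+)"] sum.cong refl)
    fix b assume "b \<in> B" then show "F (Suc k - m * b) * g b = F (Suc (k - m * b)) * g b"
      unfolding B_def by (simp add: Suc_diff_le)
  next
    fix b assume "b \<in> D" then show "F (Suc k - m * b) * g b = F 0 * g b" unfolding D_def by simp
  qed
  moreover have "conv m b0 delta0 g (Suc k) = (\<Sum>b\<in>D. g b)"
    unfolding c1
  proof -
    have "(\<Sum>b\<in>B. delta0 (Suc k - m * b) * g b) = 0"
      by (intro sum.neutral) (auto simp: B_def delta0_def)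
    moreover have "(\<Sum>b\<in>D. delta0 (Suc k - m * b) * g b) = (\<Sum>b\<in>D. g b)"
      by (intro sum.cong) (auto simp: D_def delta0_def)
    ultimately show "(\<Sum>b\<in>B. delta0 (Suc k - m * b) * g b) + (\<Sum>b\<in>D. delta0 (Suc k - m * b) * g b) = (\<Sum>b\<in>D. g b)"
      by simp
  qed
  moreover have "conv m b0 F g k = (\<Sum>b\<in>B. F (k - m * b) * g b)" unfolding conv_def B_def ..
  moreover have "conv m b0 (\<lambda>a. F (Suc a) - \<mu> * F a) g k = (\<Sum>b\<in>B. (F (Suc (k - m * b)) - \<mu> * F (k - m * b)) * g b)"
    unfolding conv_def B_def ..
  moreover have "(\<Sum>b\<in>B. (F (Suc (k - m * b)) - \<mu> * F (k - m * b)) * g b)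
     = (\<Sum>b\<in>B. F (Suc (k - m * b)) * g b) - \<mu> * (\<Sum>b\<in>B. F (k - m * b) * g b)"
    by (simp only: left_diff_distrib sum_subtractf sum_distrib_left mult.assoc)
  moreover have "(\<Sum>b\<in>D. F 0 * g b) = F 0 * (\<Sum>b\<in>D. g b)" by (simp only: sum_distrib_left)
  ultimately show ?thesis by simp
qed

lemma conv_bound:
  assumes m: "m > 0" and s: "s \<ge> 1" and C1: "\<And>a. norm (F a) \<le> C1 * s ^ a"
    and C2: "\<And>b. norm (g b) \<le> C2 * s ^ (m * b)" and C1p: "C1 \<ge> 0" and C2p: "C2 \<ge> 0"
  shows "norm (conv m b0 F g k) \<le> (C1 * C2) * ((real k + 1) * s ^ k)"
proof -
  have "norm (conv m b0 F g k) \<le> (\<Sum>b\<in>{b. b0 \<le> b \<and> m * b \<le> k}. norm (F (k - m * b) * g b))"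
    unfolding conv_def by (rule norm_sum)
  also have "\<dots> \<le> (\<Sum>b\<in>{b. b0 \<le> b \<and> m * b \<le> k}. C1 * C2 * s ^ k)"
  proof (intro sum_mono)
    fix b assume "b \<in> {b. b0 \<le> b \<and> m * b \<le> k}"
    then have bk: "m * b \<le> k" by simp
    have "norm (F (k - m * b) * g b) \<le> (C1 * s ^ (k - m * b)) * (C2 * s ^ (m * b))"
      unfolding norm_mult using C1[of "k - m * b"] C2[of b] C1p s by (intro mult_mono) auto
    also have "\<dots> = C1 * C2 * s ^ k" using bk
      by (simp add: mult_ac power_add[symmetric])
    finally show "norm (F (k - m * b) * g b) \<le> C1 * C2 * s ^ k" .
  qed
  also have "\<dots> = real (card {b. b0 \<le> b \<and> m * b \<le> k}) * (C1 * C2 * s ^ k)" by simp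
  also have "\<dots> \<le> (real k + 1) * (C1 * C2 * s ^ k)"
    using conv_card[OF m, of b0 k] C1p C2p s by (intro mult_right_mono) auto
  finally show ?thesis by (simp add: mult_ac)
qed

context ram begin

lemma err_conv_gen:
  assumes m: "m > 0" and F: "\<And>s. s > r \<Longrightarrow> \<exists>C. \<forall>a. norm (F a) \<le> C * s ^ a"
    and g: "\<And>s. s > r \<Longrightarrow> \<exists>C. \<forall>b. norm (g b) \<le> C * s ^ (m * b)"
  shows "err (conv m b0 F g)"
proof (rule errI_lin)
  fix s assume s: "r < s"
  obtain C1 where C1: "\<And>a. norm (F a) \<le> C1 * s ^ a" using F[OF s] by blast
  obtain C2 where C2: "\<And>b. norm (g b) \<le> C2 * s ^ (m * b)" using g[OF s] by blast
  have "C1 \<ge> 0" using bound_nonneg C1 by blast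
  moreover have "C2 \<ge> 0" using C2[of 0] by simp (smt (verit) norm_ge_zero)
  ultimately show "\<exists>C. \<forall>k. norm (conv m b0 F g k) \<le> C * ((real k + 1) * s ^ k)"
    using conv_bound[OF m _ C1 C2] s r1 by (intro exI[of _ "C1 * C2"]) auto
qed

lemma R_growth_m:
  assumes "R g" "m \<ge> 2" "s > r"
  shows "\<exists>C. \<forall>b. norm (g b) \<le> C * s ^ (m * b)"
proof -
  obtain C where C: "\<And>k. norm (g k) \<le> C * (s^2) ^ k" using R_growth[OF assms(1,3)] by blast
  have Cp: "C \<ge> 0" using bound_nonneg C by blast
  show ?thesis
  proof (intro exI[of _ C] allI)
    fix b
    have "(s^2)^b \<le> s ^ (m * b)"
      unfolding power_mult[symmetric] using assms r1 by (intro power_increasing) auto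
    then show "norm (g b) \<le> C * s ^ (m * b)" using C[of b] Cp by (meson mult_left_mono order_trans)
  qed
qed

lemma err_growth_m:
  assumes "err g" "m > 0" "s > r"
  shows "\<exists>C. \<forall>b. norm (g b) \<le> C * s ^ (m * b)"
proof -
  obtain C where C: "\<And>k. norm (g k) \<le> C * s ^ k" using assms unfolding err_def by blast
  have Cp: "C \<ge> 0" using bound_nonneg C by blast
  show ?thesis
  proof (intro exI[of _ C] allI)
    fix b
    have "s^b \<le> s ^ (m * b)" using assms r1 by (intro power_increasing) auto
    then show "norm (g b) \<le> C * s ^ (m * b)" using C[of b] Cp by (meson mult_left_mono order_trans)
  qed
qed

lemma delta0_bound: "s > r \<Longrightarrow> \<exists>C. \<forall>a. norm (delta0 a) \<le> C * s ^ a"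
  using r1 by (intro exI[of _ 1]) (auto simp: delta0_def)

lemma conv1_delta: "conv 1 b0 delta0 g k = (if b0 \<le> k then g k else 0)"
proof -
  have "conv 1 b0 delta0 g k = (\<Sum>b\<in>{b. b0 \<le> b \<and> b \<le> k}. if b = k then g b else 0)"
    unfolding conv_def by (intro sum.cong) (auto simp: delta0_def)
  also have "\<dots> = (if k \<in> {b. b0 \<le> b \<and> b \<le> k} then g k else 0)"
    using conv_fin[of 1 b0 k] by (intro sum.delta) simp
  also have "\<dots> = (if b0 \<le> k then g k else 0)" by simp
  finally show ?thesis .
qed

lemma conv1_delta': "conv (Suc 0) b0 delta0 g k = (if b0 \<le> k then g k else 0)"
  using conv1_delta by simp

lemma R_dil:
  assumes g: "R g" and m: "m > 0"
  shows "R (conv m b0 delta0 g)"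
proof (cases "m = 1")
  case True
  have "err (\<lambda>k. if b0 \<le> k then 0 else g k)" by (rule err_finsupp[of b0]) auto
  then have "R (\<lambda>k. g k - (if b0 \<le> k then 0 else g k))" by (intro R_diff g R_err)
  then show ?thesis unfolding True by (rule R_cong) (simp add: conv1_delta conv1_delta')
next
  case False
  then have "m \<ge> 2" using m by auto
  then show ?thesis
    by (intro R_err err_conv_gen m delta0_bound R_growth_m[OF g])
qed

lemma deg_delta:
  fixes p :: "complex poly"
  assumes "p = 0 \<or> degree p < Suc n"
  shows "pcompose p [:1,1:] - p = 0 \<or> degree (pcompose p [:1,1:] - p) < n"
proof (rule deg_drop)
  have dp: "degree p \<le> n" using assms by auto
  have dc: "degree (pcompose p [:1,1:]) = degree p" by (simp add: degree_pcompose)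
  show "degree (pcompose p [:1,1:] - p) \<le> n" using dp dc by (intro degree_diff_le) auto
  show "coeff (pcompose p [:1,1:] - p) n = 0"
  proof (cases "degree p = n")
    case True
    have "coeff (pcompose p [:1,1:]) n = lead_coeff p"
      using lead_coeff_comp[of "[:1,1:]" p] True dc by simp
    then show ?thesis using True by simp
  next
    case False
    then have "degree p < n" using dp by auto
    then show ?thesis using dc by (simp add: coeff_eq_0)
  qed
qed

lemma R_conv_atom:
  assumes mu: "\<mu> \<in> Lam" and g: "R g" and m: "m > 0"
  shows "R (conv m b0 (expoly \<mu> p) g)"
proof -
  have "\<forall>p. (p = 0 \<or> degree p < n) \<longrightarrow> R (conv m b0 (expoly \<mu> p) g)" for n
  proof (induction n)
    case 0
    show ?case
    proof (intro allI impI)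
      fix p :: "complex poly" assume "p = 0 \<or> degree p < 0"
      then have "p = 0" by auto
      have "expoly \<mu> p = (\<lambda>a. 0)" using \<open>p = 0\<close> by (intro ext) simp
      then show "R (conv m b0 (expoly \<mu> p) g)"
        by (rule ssubst) (rule R_cong[OF R_zero], simp add: conv_zero)
    qed
  next
    case (Suc n)
    show ?case
    proof (intro allI impI)
      fix p :: "complex poly" assume p: "p = 0 \<or> degree p < Suc n"
      define p' where "p' = smult \<mu> (pcompose p [:1,1:] - p)"
      have p': "p' = 0 \<or> degree p' < n" unfolding p'_def using deg_delta[OF p]
        by (metis degree_smult_le le_less_trans smult_0_right)
      have eq: "(\<lambda>a. expoly \<mu> p (Suc a) - \<mu> * expoly \<mu> p a) = expoly \<mu> p'"
        by (rule ext) (simp add: p'_def expoly_def poly_pcompose algebra_simps)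
      have R1: "R (conv m b0 (expoly \<mu> p') g)" using Suc.IH p' by blast
      have R2: "R (\<lambda>k. conv m b0 delta0 g (Suc k))" by (rule R_shift[OF R_dil[OF g m]])
      have "R (\<lambda>k. conv m b0 (expoly \<mu> p') g k + expoly \<mu> p 0 * conv m b0 delta0 g (Suc k))"
        by (rule R_add[OF R1 R_mult[OF R2]])
      then have "R (\<lambda>k. conv m b0 (expoly \<mu> p) g (Suc k) - \<mu> * conv m b0 (expoly \<mu> p) g k)"
        by (rule R_cong) (simp only: conv_shift[OF m] eq)
      then show "R (conv m b0 (expoly \<mu> p) g)" by (rule R_int[OF mu])
    qed
  qed
  then show ?thesis by blast
qed

lemma conv1_swap:
  "conv 1 b0 e g k = conv 1 0 (\<lambda>n. if b0 \<le> n then g n else 0) e k"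
proof -
  have "conv 1 b0 e g k = (\<Sum>b\<in>{..k}. e (k - b) * (if b0 \<le> b then g b else 0))"
    unfolding conv_def by (rule sum.mono_neutral_cong_left) auto
  also have "\<dots> = (\<Sum>b\<in>{..k}. (if b0 \<le> k - b then g (k - b) else 0) * e b)"
    by (rule sum.reindex_bij_witness[of _ "\<lambda>b. k - b" "\<lambda>b. k - b"]) auto
  also have "\<dots> = conv 1 0 (\<lambda>n. if b0 \<le> n then g n else 0) e k"
    unfolding conv_def by (intro sum.cong) auto
  finally show ?thesis .
qed

lemma R_conv_err:
  assumes e: "err e" and g: "R g" and m: "m > 0"
  shows "R (conv m b0 e g)"
proof -
  have eb: "\<And>s. s > r \<Longrightarrow> \<exists>C. \<forall>a. norm (e a) \<le> C * s ^ a" using e unfolding err_def by simp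
  show ?thesis
  proof (cases "m = 1")
    case False
    then have m2: "m \<ge> 2" using m by auto
    show ?thesis by (rule R_err[OF err_conv_gen[OF m eb R_growth_m[OF g m2]]])
  next
    case True
    define g' where "g' = (\<lambda>n. if b0 \<le> n then g n else 0)"
    have gg: "g' k = conv 1 b0 delta0 g k" for k
      unfolding g'_def by (rule conv1_delta[symmetric])
    have "R g'" by (rule R_cong[OF R_dil[OF g zero_less_one, of b0]]) (rule gg)
    then obtain q e2 where qe: "err e2" "\<And>k. g' k = (\<Sum>\<nu>\<in>Lam. expoly \<nu> (q \<nu>) k) + e2 k"
      unfolding R_def by blast
    have e2b: "\<And>s. s > r \<Longrightarrow> \<exists>C. \<forall>a. norm (e2 a) \<le> C * s ^ a" using qe(1) unfolding err_def by simp
    have A: "R (conv 1 0 (expoly \<nu> (q \<nu>)) e)" if "\<nu> \<in> Lam" for \<nu>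
      by (rule R_conv_atom[OF that R_err[OF e]]) simp
    have B: "err (conv 1 0 e2 e)"
      by (rule err_conv_gen[OF zero_less_one e2b err_growth_m[OF e zero_less_one]])
    have "R (\<lambda>k. (\<Sum>\<nu>\<in>Lam. conv 1 0 (expoly \<nu> (q \<nu>)) e k) + conv 1 0 e2 e k)"
      by (rule R_add[OF R_sum[OF finL A] R_err[OF B]])
    then show ?thesis
    proof (rule R_cong)
      fix k
      have gq: "g' = (\<lambda>a. (\<Sum>\<nu>\<in>Lam. expoly \<nu> (q \<nu>) a) + e2 a)" using qe(2) by auto
      have "conv m b0 e g k = conv 1 0 g' e k"
        unfolding True g'_def by (rule conv1_swap)
      also have "\<dots> = conv 1 0 (\<lambda>a. (\<Sum>\<nu>\<in>Lam. expoly \<nu> (q \<nu>) a) + e2 a) e k"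
        by (simp only: gq)
      finally have "conv m b0 e g k = conv 1 0 (\<lambda>a. (\<Sum>\<nu>\<in>Lam. expoly \<nu> (q \<nu>) a) + e2 a) e k" .
      also have "\<dots> = (\<Sum>\<nu>\<in>Lam. conv 1 0 (expoly \<nu> (q \<nu>)) e k) + conv 1 0 e2 e k"
        by (simp only: conv_add conv_sum)
      finally show "conv m b0 e g k = (\<Sum>\<nu>\<in>Lam. conv 1 0 (expoly \<nu> (q \<nu>)) e k) + conv 1 0 e2 e k" .
    qed
  qed
qed

lemma R_conv:
  assumes F: "R F" and g: "R g" and m: "m > 0"
  shows "R (conv m b0 F g)"
proof -
  obtain p e where pe: "err e" "\<And>k. F k = (\<Sum>\<mu>\<in>Lam. expoly \<mu> (p \<mu>) k) + e k"
    using F unfolding R_def by blast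
  have "R (\<lambda>k. (\<Sum>\<mu>\<in>Lam. conv m b0 (expoly \<mu> (p \<mu>)) g k) + conv m b0 e g k)"
    by (intro R_add R_sum finL R_conv_atom R_conv_err pe(1) g m)
  then show ?thesis
  proof (rule R_cong)
    fix k
    have "F = (\<lambda>a. (\<Sum>\<mu>\<in>Lam. expoly \<mu> (p \<mu>) a) + e a)" using pe(2) by auto
    then show "conv m b0 F g k = (\<Sum>\<mu>\<in>Lam. conv m b0 (expoly \<mu> (p \<mu>)) g k) + conv m b0 e g k"
      by (simp only: conv_add conv_sum)
  qed
qed

end


definition Aset :: "(nat \<Rightarrow> nat) \<Rightarrow> (nat \<Rightarrow> nat) \<Rightarrow> nat \<Rightarrow> nat \<Rightarrow> (nat \<Rightarrow> nat) set" where
  "Aset k0 m s k = {kv. (\<forall>i<s. k0 i \<le> kv i) \<and> (\<forall>i\<ge>s. kv i = 0) \<and> (\<Sum>i<s. m i * kv i) = k}"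

lemma trunc_conv_Aset: "trunc_conv s g k0 m k = (\<Sum>kv\<in>Aset k0 m s k. \<Prod>i<s. g i (kv i))"
  unfolding trunc_conv_def Aset_def ..

lemma fin_bounded_funs: "finite {f::nat \<Rightarrow> nat. (\<forall>i. f i \<le> k) \<and> (\<forall>i\<ge>s. f i = 0)}"
proof (induction s)
  case 0
  have "{f::nat \<Rightarrow> nat. (\<forall>i. f i \<le> k) \<and> (\<forall>i\<ge>0. f i = 0)} \<subseteq> {\<lambda>_. 0}" by auto
  then show ?case by (rule finite_subset) simp
next
  case (Suc s)
  have "{f::nat \<Rightarrow> nat. (\<forall>i. f i \<le> k) \<and> (\<forall>i\<ge>Suc s. f i = 0)}
        \<subseteq> (\<lambda>(f, b). f(s := b)) ` ({f::nat \<Rightarrow> nat. (\<forall>i. f i \<le> k) \<and> (\<forall>i\<ge>s. f i = 0)} \<times> {..k})"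
  proof
    fix f :: "nat \<Rightarrow> nat" assume f: "f \<in> {f. (\<forall>i. f i \<le> k) \<and> (\<forall>i\<ge>Suc s. f i = 0)}"
    have e1: "f = (\<lambda>(f, b). f(s := b)) (f(s := 0), f s)" by auto
    have "\<forall>i\<ge>s. (f(s:=0)) i = 0"
    proof (intro allI impI)
      fix i assume i: "s \<le> i"
      show "(f(s:=0)) i = 0"
      proof (cases "i = s")
        case False then have "Suc s \<le> i" using i by simp
        then show ?thesis using f by simp
      qed simp
    qed
    then have e3: "(f(s := 0), f s) \<in> {f::nat \<Rightarrow> nat. (\<forall>i. f i \<le> k) \<and> (\<forall>i\<ge>s. f i = 0)} \<times> {..k}"
      using f by auto
    show "f \<in> (\<lambda>(f, b). f(s := b)) ` ({f::nat \<Rightarrow> nat. (\<forall>i. f i \<le> k) \<and> (\<forall>i\<ge>s. f i = 0)} \<times> {..k})"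
      by (rule image_eqI[where x="(f(s := 0), f s)" and f="\<lambda>(f, b). f(s := b)", OF e1 e3])
  qed
  then show ?case by (rule finite_subset) (use Suc.IH in auto)
qed

lemma fin_Aset:
  assumes m: "\<forall>i<s. m i > 0"
  shows "finite (Aset k0 m s k)"
proof (rule finite_subset[OF _ fin_bounded_funs[of k s]])
  show "Aset k0 m s k \<subseteq> {f::nat \<Rightarrow> nat. (\<forall>i. f i \<le> k) \<and> (\<forall>i\<ge>s. f i = 0)}"
  proof
    fix kv assume kv: "kv \<in> Aset k0 m s k"
    have "kv i \<le> k" for i
    proof (cases "i < s")
      case True
      have "kv i \<le> m i * kv i" using le_mb m True by blast
      also have "\<dots> \<le> (\<Sum>j<s. m j * kv j)" using True by (intro member_le_sum) auto
      also have "\<dots> = k" using kv unfolding Aset_def by simp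
      finally show ?thesis .
    next
      case False then show ?thesis using kv unfolding Aset_def by simp
    qed
    then show "kv \<in> {f::nat \<Rightarrow> nat. (\<forall>i. f i \<le> k) \<and> (\<forall>i\<ge>s. f i = 0)}" using kv unfolding Aset_def by simp
  qed
qed

lemma trunc_conv_Suc:
  assumes m: "\<forall>i<Suc s. m i > 0"
  shows "trunc_conv (Suc s) g k0 m k = conv (m s) (k0 s) (trunc_conv s g k0 m) (g s) k"
proof -
  define B where "B = {b. k0 s \<le> b \<and> m s * b \<le> k}"
  have ms: "m s > 0" using m by simp
  have fB: "finite B" unfolding B_def by (rule conv_fin[OF ms])
  have fA: "finite (Aset k0 m s j)" for j by (rule fin_Aset) (use m in auto)
  have "conv (m s) (k0 s) (trunc_conv s g k0 m) (g s) k
        = (\<Sum>b\<in>B. \<Sum>kv\<in>Aset k0 m s (k - m s * b). (\<Prod>i<s. g i (kv i)) * g s b)"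
    unfolding conv_def B_def[symmetric] trunc_conv_Aset by (simp add: sum_distrib_right)
  also have "\<dots> = (\<Sum>(b, kv)\<in>(SIGMA b:B. Aset k0 m s (k - m s * b)). (\<Prod>i<s. g i (kv i)) * g s b)"
    by (intro sum.Sigma fB ballI fA)
  also have "\<dots> = (\<Sum>kv\<in>Aset k0 m (Suc s) k. \<Prod>i<Suc s. g i (kv i))"
  proof (rule sum.reindex_bij_witness[of _ "\<lambda>kv. (kv s, kv(s := 0))" "\<lambda>(b, kv). kv(s := b)"])
    fix a assume a: "a \<in> (SIGMA b:B. Aset k0 m s (k - m s * b))"
    then obtain b kv where a': "a = (b, kv)" "b \<in> B" "kv \<in> Aset k0 m s (k - m s * b)" by auto
    then have kvs: "kv s = 0" unfolding Aset_def by simp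
    show "((\<lambda>(b, kv). kv(s := b)) a s, ((\<lambda>(b, kv). kv(s := b)) a)(s := 0)) = a"
      using a' kvs by (auto simp: fun_eq_iff)
    have sum_eq: "(\<Sum>i<s. m i * (kv(s := b)) i) = (\<Sum>i<s. m i * kv i)" by (intro sum.cong) auto
    have bk: "m s * b \<le> k" using a'(2) unfolding B_def by simp
    show "(case a of (b, kv) \<Rightarrow> kv(s := b)) \<in> Aset k0 m (Suc s) k"
      using a' bk sum_eq unfolding Aset_def by (auto simp: less_Suc_eq B_def)
    have "(\<Prod>i<Suc s. g i ((kv(s := b)) i)) = (\<Prod>i<s. g i ((kv(s := b)) i)) * g s b" by simp
    also have "(\<Prod>i<s. g i ((kv(s := b)) i)) = (\<Prod>i<s. g i (kv i))" by (intro prod.cong) auto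
    finally show "(\<Prod>i<Suc s. g i ((case a of (b, kv) \<Rightarrow> kv(s := b)) i)) = (case a of (b, kv) \<Rightarrow> (\<Prod>i<s. g i (kv i)) * g s b)"
      using a' by simp
  next
    fix kv assume kv: "kv \<in> Aset k0 m (Suc s) k"
    show "(\<lambda>(b, kv). kv(s := b)) (kv s, kv(s := 0)) = kv" by auto
    have sum_eq: "(\<Sum>i<s. m i * (kv(s := 0)) i) = (\<Sum>i<s. m i * kv i)" by (intro sum.cong) auto
    have tot: "(\<Sum>i<s. m i * kv i) + m s * kv s = k" using kv unfolding Aset_def by simp
    show "(kv s, kv(s := 0)) \<in> (SIGMA b:B. Aset k0 m s (k - m s * b))"
      using kv tot sum_eq unfolding Aset_def B_def by auto
  qed
  finally show ?thesis unfolding trunc_conv_Aset ..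
qed

lemma trunc_conv_0: "trunc_conv 0 g k0 m = delta0"
proof
  fix k
  have "Aset k0 m 0 k = (if k = 0 then {\<lambda>_. 0} else {})" unfolding Aset_def by auto
  then show "trunc_conv 0 g k0 m k = delta0 k" unfolding trunc_conv_Aset delta0_def by simp
qed

context ram begin

lemma R_delta0: "R delta0"
  by (rule R_err, rule err_finsupp[of 1]) (auto simp: delta0_def)

lemma R_trunc_conv:
  assumes "\<forall>i<s. m i > 0" "\<forall>i<s. R (g i)"
  shows "R (trunc_conv s g k0 m)"
  using assms
proof (induction s)
  case 0 then show ?case by (simp add: trunc_conv_0 R_delta0)
next
  case (Suc s)
  have "R (conv (m s) (k0 s) (trunc_conv s g k0 m) (g s))"
    using Suc by (intro R_conv) auto
  then show ?case by (rule R_cong) (rule trunc_conv_Suc[OF Suc.prems(1)])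
qed

end


lemma eig_indep:
  fixes A :: "complex^'n^'n"
  assumes fin: "finite S" and ev: "\<And>\<mu>. \<mu> \<in> S \<Longrightarrow> V \<mu> \<noteq> 0 \<and> A *v V \<mu> = \<mu> *s V \<mu>"
  shows "(\<Sum>\<mu>\<in>S. c \<mu> *s V \<mu>) = 0 \<Longrightarrow> \<forall>\<mu>\<in>S. c \<mu> = 0"
  using fin ev
proof (induction S arbitrary: c rule: finite_induct)
  case empty then show ?case by simp
next
  case (insert l S)
  define T0 where "T0 = (\<Sum>\<mu>\<in>S. c \<mu> *s V \<mu>)"
  define T1 where "T1 = (\<Sum>\<mu>\<in>S. c \<mu> *s (\<mu> *s V \<mu>))"
  have E: "c l *s V l + T0 = 0" using insert.prems(1) insert.hyps unfolding T0_def by simp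
  have "A *v (c l *s V l + T0) = c l *s (A *v V l) + (\<Sum>\<mu>\<in>S. c \<mu> *s (A *v V \<mu>))"
    unfolding T0_def by (simp only: vec.add vec.sum vec.scale)
  also have "\<dots> = c l *s (l *s V l) + T1"
    unfolding T1_def using insert.prems(2) by (auto intro!: sum.cong)
  finally have E1: "c l *s (l *s V l) + T1 = 0" using E by simp
  have E2: "l *s (c l *s V l + T0) = 0" using E by simp
  have key: "(\<Sum>\<mu>\<in>S. (c \<mu> * (\<mu> - l)) *s V \<mu>) = (c l *s (l *s V l) + T1) - l *s (c l *s V l + T0)"
  proof (rule iffD2[OF vec_eq_iff], intro allI)
    fix i
    have "(\<Sum>\<mu>\<in>S. (c \<mu> * (\<mu> - l)) *s V \<mu>)$i = (\<Sum>\<mu>\<in>S. c \<mu> * (\<mu> - l) * V \<mu>$i)"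
      by (simp add: sum_component)
    also have "\<dots> = (\<Sum>\<mu>\<in>S. c \<mu> * (\<mu> * V \<mu>$i)) - l * (\<Sum>\<mu>\<in>S. c \<mu> * V \<mu>$i)"
      by (simp add: sum_distrib_left sum_subtractf[symmetric] algebra_simps)
    also have "\<dots> = ((c l *s (l *s V l) + T1) - l *s (c l *s V l + T0))$i"
      unfolding T0_def T1_def by (simp add: sum_component algebra_simps)
    finally show "(\<Sum>\<mu>\<in>S. (c \<mu> * (\<mu> - l)) *s V \<mu>)$i = ((c l *s (l *s V l) + T1) - l *s (c l *s V l + T0))$i" .
  qed
  also have "\<dots> = 0" using E1 E2 by simp
  finally have "\<forall>\<mu>\<in>S. c \<mu> * (\<mu> - l) = 0"
    using insert.IH[of "\<lambda>\<mu>. c \<mu> * (\<mu> - l)"] insert.prems(2) by auto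
  then have cS: "\<forall>\<mu>\<in>S. c \<mu> = 0" using insert.hyps(2) by auto
  then have "T0 = 0" unfolding T0_def by simp
  then have "c l *s V l = 0" using E by simp
  then have "c l = 0" using insert.prems(2)[of l] by simp
  then show ?case using cS by simp
qed

lemma finite_spectrum: "finite (mat_spectrum (A :: complex^'n^'n))"
proof (rule ccontr)
  assume inf: "infinite (mat_spectrum A)"
  define V where "V = (\<lambda>\<mu>. SOME v. v \<noteq> 0 \<and> A *v v = \<mu> *s v)"
  have V: "V \<mu> \<noteq> 0 \<and> A *v V \<mu> = \<mu> *s V \<mu>" if "\<mu> \<in> mat_spectrum A" for \<mu>
  proof -
    have "\<exists>v. v \<noteq> 0 \<and> A *v v = \<mu> *s v" using that unfolding mat_spectrum_def by simp
    then show ?thesis unfolding V_def by (rule someI_ex)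
  qed
  obtain S where S: "finite S" "card S = CARD('n) + 1" "S \<subseteq> mat_spectrum A"
    using infinite_arbitrarily_large[OF inf] by blast
  have VS: "V \<mu> \<noteq> 0 \<and> A *v V \<mu> = \<mu> *s V \<mu>" if "\<mu> \<in> S" for \<mu>
  proof -
    have "\<mu> \<in> mat_spectrum A" using S(3) that by auto
    then show ?thesis by (rule V)
  qed
  have inj: "inj_on V S"
  proof
    fix x y assume xy: "x \<in> S" "y \<in> S" "V x = V y"
    have "x *s V x = A *v V x" using VS[OF xy(1)] by simp
    also have "\<dots> = A *v V y" using xy(3) by simp
    also have "\<dots> = y *s V y" using VS[OF xy(2)] by simp
    finally have "x *s V x = y *s V x" using xy(3) by simp
    then have "(x - y) *s V x = 0" by (simp add: vec.scale_left_diff_distrib)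
    then show "x = y" using VS[OF xy(1)] by simp
  qed
  have "vec.independent (V ` S)"
    unfolding vec.independent_explicit
  proof (intro conjI allI impI ballI)
    show "finite (V ` S)" using S(1) by simp
  next
    fix c v assume c: "(\<Sum>v\<in>V ` S. c v *s v) = 0" and v: "v \<in> V ` S"
    have c0: "(\<Sum>\<mu>\<in>S. c (V \<mu>) *s V \<mu>) = 0" using c sum.reindex[OF inj, of "\<lambda>v. c v *s v"] by simp
    have "\<forall>\<mu>\<in>S. c (V \<mu>) = 0" by (rule eig_indep[OF S(1) VS c0])
    then show "c v = 0" using v by auto
  qed
  then have "card (V ` S) \<le> vec.dim (V ` S)" using vec.independent_bound_general by blast
  also have "\<dots> \<le> CARD('n)" by (rule dim_subset_UNIV_cart_gen)
  finally show False using card_image[OF inj] S(2) by simp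
qed

lemma spectral_rad_ge: "\<mu> \<in> mat_spectrum (A :: complex^'n^'n) \<Longrightarrow> norm \<mu> \<le> spectral_rad A"
  unfolding spectral_rad_def using finite_spectrum[of A] by (intro Max_ge) auto

lemma one_eig:
  fixes tail head :: "'d::finite \<Rightarrow> 'v::finite" and rv :: "'d \<Rightarrow> 'd"
  assumes G: "graph tail head rv" and nh: "no_half_loops rv" and ord: "graph_order tail > 0"
  shows "1 \<in> mat_spectrum (hashimoto tail head rv)"
proof -
  have rr: "rv (rv e) = e" and tr: "tail (rv e) = head e" for e using G unfolding graph_def by auto
  have hr: "head (rv e) = tail e" for e using tr[of "rv e"] rr[of e] by simp
  have nfix: "rv e \<noteq> e" for e using nh unfolding no_half_loops_def by auto
  obtain \<iota> :: "'d \<Rightarrow> nat" where inj\<iota>: "inj \<iota>" using countable_class.ex_inj by blast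
  define R where "R = {e. \<iota> e < \<iota> (rv e)}"
  have neq: "\<iota> e \<noteq> \<iota> (rv e)" for e
  proof
    assume "\<iota> e = \<iota> (rv e)"
    then have "e = rv e" using inj\<iota> by (simp add: inj_eq)
    then show False using nfix[of e] by simp
  qed
  have notR: "rv e \<in> R" if "e \<notin> R" for e
  proof -
    have "\<iota> (rv e) < \<iota> e" using that neq[of e] unfolding R_def by simp
    then show ?thesis unfolding R_def using rr[of e] by simp
  qed
  have RrvR: "rv e \<notin> R" if "e \<in> R" for e using that rr[of e] unfolding R_def by simp
  have injrv: "inj rv"
  proof (rule injI)
    fix x y assume "rv x = rv y"
    then have "rv (rv x) = rv (rv y)" by simp
    then show "x = y" using rr by simp
  qed
  have un: "UNIV = R \<union> rv ` R"
  proof -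
    have "e \<in> R \<union> rv ` R" for e
    proof (cases "e \<in> R")
      case False
      then have "rv e \<in> R" by (rule notR)
      then have "rv (rv e) \<in> rv ` R" by (rule imageI)
      then show ?thesis using rr[of e] by simp
    qed simp
    then show ?thesis by blast
  qed
  have dis: "R \<inter> rv ` R = {}" using RrvR by auto
  have "CARD('d) = card (R \<union> rv ` R)" using un by simp
  also have "\<dots> = card R + card (rv ` R)" using dis by (intro card_Un_disjoint) auto
  also have "card (rv ` R) = card R" by (rule card_image) (rule inj_on_subset[OF injrv], simp)
  finally have cR: "card R = CARD('d) div 2" by simp
  have cRv: "card R > CARD('v)" using ord cR unfolding graph_order_def by simp
  define U where "U = {x :: complex^'d. \<forall>i. i \<notin> R \<longrightarrow> x$i = 0}"
  have dimU: "vec.dim U = card R" unfolding U_def by (rule dim_substandard_cart)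
  have subU: "vec.subspace U" unfolding vec.subspace_def U_def by simp
  define M :: "complex^'d^'v" where
    "M = (\<chi> v e. (if tail e = v then 1 else 0) - (if head e = v then 1 else 0))"
  have "\<not> inj_on ((*v) M) (vec.span U)"
  proof
    assume "inj_on ((*v) M) (vec.span U)"
    then have "vec.dim ((*v) M ` U) = vec.dim U"
      by (rule vec.dim_image_eq[OF matrix_vector_mul_linear_gen])
    moreover have "vec.dim ((*v) M ` U) \<le> CARD('v)" by (rule dim_subset_UNIV_cart_gen)
    ultimately show False using dimU cRv by simp
  qed
  then obtain x y where xy: "x \<in> U" "y \<in> U" "x \<noteq> y" "M *v x = M *v y"
    unfolding inj_on_def vec.span_eq_iff[THEN iffD2, OF subU] by blast
  define u where "u = x - y"
  have uU: "u \<in> U" using xy subU unfolding u_def by (simp add: vec.subspace_diff)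
  have u0: "u \<noteq> 0" using xy unfolding u_def by simp
  have Mu: "M *v u = 0" using xy unfolding u_def by (simp add: vec.diff)
  define w :: "complex^'d" where "w = (\<chi> e. u$e - u$(rv e))"
  have w_rv: "w$(rv e) = - w$e" for e unfolding w_def using rr by simp
  have w0: "w \<noteq> 0"
  proof -
    obtain e where e: "u$e \<noteq> 0" using u0 by (metis vec_eq_iff zero_index)
    then have "e \<in> R" using uU unfolding U_def by auto
    then have "rv e \<notin> R" by (rule RrvR)
    then have "u$(rv e) = 0" using uU unfolding U_def by auto
    then have "w$e \<noteq> 0" using e unfolding w_def by simp
    then show ?thesis by auto
  qed
  have div: "(\<Sum>e\<in>UNIV. if tail e = v then w$e else 0) = 0" for v
  proof -
    have "(\<Sum>e\<in>UNIV. if tail e = v then w$e else 0)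
        = (\<Sum>e\<in>UNIV. if tail e = v then u$e else 0) - (\<Sum>e\<in>UNIV. if tail e = v then u$(rv e) else 0)"
      unfolding w_def by (simp add: sum_subtractf[symmetric] if_distrib cong: if_cong)
    also have "(\<Sum>e\<in>UNIV. if tail e = v then u$(rv e) else 0) = (\<Sum>e\<in>UNIV. if head e = v then u$e else 0)"
      by (rule sum.reindex_bij_witness[of _ rv rv]) (auto simp: rr hr)
    also have "(\<Sum>e\<in>UNIV. if tail e = v then u$e else 0) - (\<Sum>e\<in>UNIV. if head e = v then u$e else 0)
        = (M *v u)$v"
    proof -
      have "(\<Sum>e\<in>UNIV. if tail e = v then u$e else 0) - (\<Sum>e\<in>UNIV. if head e = v then u$e else 0)
          = (\<Sum>e\<in>UNIV. (if tail e = v then u$e else 0) - (if head e = v then u$e else 0))"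
        by (simp add: sum_subtractf)
      also have "\<dots> = (M *v u)$v"
        unfolding M_def matrix_vector_mult_def by (auto intro!: sum.cong)
      finally show ?thesis .
    qed
    finally show ?thesis using Mu by simp
  qed
  have "hashimoto tail head rv *v w = 1 *s w"
  proof (rule iffD2[OF vec_eq_iff], intro allI)
    fix e
    have "(hashimoto tail head rv *v w)$e = (\<Sum>e'\<in>UNIV. if head e = tail e' \<and> e' \<noteq> rv e then w$e' else 0)"
      unfolding hashimoto_def matrix_vector_mult_def by (auto intro!: sum.cong)
    also have "\<dots> = (\<Sum>e'\<in>UNIV. if tail e' = head e then w$e' else 0) - (if tail (rv e) = head e then w$(rv e) else 0)"
    proof -
      have "(\<Sum>e'\<in>UNIV. if tail e' = head e then w$e' else 0)
          = (\<Sum>e'\<in>UNIV. if head e = tail e' \<and> e' \<noteq> rv e then w$e' else 0) + (if tail (rv e) = head e then w$(rv e) else 0)"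
      proof -
        have "(\<Sum>e'\<in>UNIV. if tail e' = head e then w$e' else 0)
            = (\<Sum>e'\<in>UNIV. (if head e = tail e' \<and> e' \<noteq> rv e then w$e' else 0) + (if e' = rv e then (if tail (rv e) = head e then w$(rv e) else 0) else 0))"
          by (intro sum.cong) auto
        also have "\<dots> = (\<Sum>e'\<in>UNIV. if head e = tail e' \<and> e' \<noteq> rv e then w$e' else 0) + (if tail (rv e) = head e then w$(rv e) else 0)"
          by (simp add: sum.distrib)
        finally show ?thesis .
      qed
      then show ?thesis by simp
    qed
    also have "\<dots> = w$e" using div[of "head e"] tr[of e] w_rv[of e] by simp
    finally show "(hashimoto tail head rv *v w)$e = (1 *s w)$e" by simp
  qed
  then show ?thesis unfolding mat_spectrum_def using w0 by blast
qed


lemma powr_half_pow: "x > 0 \<Longrightarrow> x powr (real k / 2) = sqrt x ^ k"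
proof -
  assume x: "x > 0"
  have "sqrt x ^ k = sqrt x powr real k" using x by (simp add: powr_realpow)
  also have "\<dots> = (x powr (1/2)) powr real k" using x by (simp add: powr_half_sqrt)
  also have "\<dots> = x powr (real k / 2)" by (simp add: powr_powr)
  finally show ?thesis by simp
qed

theorem theorem2p18:
  fixes tail head :: "'d::finite \<Rightarrow> 'v::finite" and rv :: "'d \<Rightarrow> 'd"
    and s :: nat and m k0 :: "nat \<Rightarrow> nat" and g :: "nat \<Rightarrow> nat \<Rightarrow> complex"
  assumes "graph tail head rv" and "no_half_loops rv" and "connected_graph tail head"
    and "graph_order tail > 0"
    and "s \<ge> 1"
    and "\<forall>i<s. m i > 0 \<and> k0 i > 0"
    and "\<forall>i<s. B_ramanujan tail head rv (g i)"
  shows "B_ramanujan tail head rv (trunc_conv s g k0 m)"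
proof -
  define H where "H = hashimoto tail head rv"
  define Lam where "Lam = mat_spectrum H"
  define \<rho> where "\<rho> = spectral_rad H"
  have one: "1 \<in> Lam" using one_eig[OF assms(1,2,4)] unfolding Lam_def H_def .
  have \<rho>1: "\<rho> \<ge> 1" using spectral_rad_ge[of 1 H] one unfolding \<rho>_def Lam_def by simp
  have sq1: "1 \<le> sqrt \<rho>" using \<rho>1 by simp
  have sq2: "sqrt \<rho> ^ 2 = \<rho>" using \<rho>1 by simp
  interpret ram Lam "sqrt \<rho>"
  proof
    show "finite Lam" unfolding Lam_def by (rule finite_spectrum)
    show "1 \<le> sqrt \<rho>" by (rule sq1)
    fix \<mu> assume "\<mu> \<in> Lam"
    then have "\<mu> \<in> mat_spectrum H" unfolding Lam_def .
    then have "norm \<mu> \<le> \<rho>" unfolding \<rho>_def by (rule spectral_rad_ge)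
    then show "norm \<mu> \<le> sqrt \<rho> ^ 2" using sq2 by simp
  qed
  have errEq: "err e \<longleftrightarrow> (\<forall>\<epsilon>>0. \<exists>C. \<forall>k. norm (e k) \<le> C * (\<rho> + \<epsilon>) powr (real k / 2))" for e
  proof
    assume e: "err e"
    show "\<forall>\<epsilon>>0. \<exists>C. \<forall>k. norm (e k) \<le> C * (\<rho> + \<epsilon>) powr (real k / 2)"
    proof (intro allI impI)
      fix \<epsilon> :: real assume \<epsilon>: "\<epsilon> > 0"
      have "sqrt (\<rho> + \<epsilon>) > sqrt \<rho>" using \<epsilon> by simp
      then obtain C where C: "\<And>k. norm (e k) \<le> C * sqrt (\<rho> + \<epsilon>) ^ k" using e unfolding err_def by blast
      show "\<exists>C. \<forall>k. norm (e k) \<le> C * (\<rho> + \<epsilon>) powr (real k / 2)"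
        using C \<rho>1 \<epsilon> by (intro exI[of _ C]) (simp add: powr_half_pow)
    qed
  next
    assume e: "\<forall>\<epsilon>>0. \<exists>C. \<forall>k. norm (e k) \<le> C * (\<rho> + \<epsilon>) powr (real k / 2)"
    show "err e" unfolding err_def
    proof (intro allI impI)
      fix s :: real assume s: "s > sqrt \<rho>"
      then have sp: "s > 0" using sq1 by linarith
      have "s^2 > sqrt \<rho> ^ 2" using s sq1 by (intro power_strict_mono) auto
      then have "s^2 - \<rho> > 0" using sq2 by simp
      then obtain C where C: "\<And>k. norm (e k) \<le> C * (\<rho> + (s^2 - \<rho>)) powr (real k / 2)" using e by blast
      have "(\<rho> + (s^2 - \<rho>)) powr (real k / 2) = s ^ k" for k
        using sp by (simp add: powr_half_pow)
      then show "\<exists>C. \<forall>k. norm (e k) \<le> C * s ^ k" using C by (intro exI[of _ C]) simp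
    qed
  qed
  have BR: "B_ramanujan tail head rv P \<longleftrightarrow> R P" for P
  proof -
    have "B_ramanujan tail head rv P \<longleftrightarrow> (\<exists>p er. (\<forall>k. P k = (\<Sum>\<mu>\<in>Lam. \<mu> ^ k * poly (p \<mu>) (of_nat k)) + er k) \<and>
        (\<forall>\<epsilon>>0. \<exists>C. \<forall>k. norm (er k) \<le> C * (\<rho> + \<epsilon>) powr (real k / 2)))"
      unfolding B_ramanujan_def Let_def H_def[symmetric] Lam_def[symmetric] \<rho>_def[symmetric] ..
    also have "\<dots> \<longleftrightarrow> R P" unfolding R_def errEq expoly_def by blast
    finally show ?thesis .
  qed
  have "R (trunc_conv s g k0 m)"
    by (rule R_trunc_conv) (use assms(6,7) BR in auto)
  then show ?thesis using BR by simp
qed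


end
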